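(* Consider the noisy Hegselmann–Krause model with heterogeneously prejudiced agents described in the context, with $\epsilon\in(0,1)$, $\alpha\in(0,1]$ and noise bound $\delta\ge0$. For every initial condition $x(0)\in[0,1]^n$, almost surely $$\limsup_{t\to\infty}\max_{i\in\mathcal{S}_1}|x_i(t)-J_1|\le\frac{(1-\alpha)\epsilon+\delta}{\alpha}\quad\text{and}\quad \limsup_{t\to\infty}\max_{i\in\mathcal{S}_2}|x_i(t)-J_2|\le\frac{(1-\alpha)\epsilon+\delta}{\alpha}.$$
   Context: Agents $\mathcal{V}=\{1,\dots,n\}$ with opinions $x_i(t)\in[0,1]$, $t=0,1,2,\dots$. $\mathcal{V}=\mathcal{S}_1\cup\mathcal{S}_2$ with $\mathcal{S}_1\cap\mathcal{S}_2=\emptyset$; agents in $\mathcal{S}_k$ have prejudice value $J_k\in[0,1]$ ($k=1,2$), with $|J_1-J_2|>\epsilon$. Confidence bound $\epsilon$, attraction strength $\alpha\in(0,1]$. Neighbor set $\mathcal{N}_i(x(t))=\{j\in\mathcal{V}:|x_j(t)-x_i(t)|\le\epsilon\}$. For $i\in\mathcal{S}_k$, $x_i^*(t)=(1-\alpha)|\mathcal{N}_i(x(t))|^{-1}\sum_{j\in\mathcal{N}_i(x(t))}x_j(t)+\alpha J_k+\xi_i(t+1)$, and $x_i(t+1)$ equals $1$ if $x_i^*(t)>1$, $x_i^*(t)$ if $x_i^*(t)\in[0,1]$, $0$ if $x_i^*(t)<0$. The noises $\{\xi_i(t)\}_{i\in\mathcal{V},t\ge1}$ are i.i.d. with $E\xi_1(1)=0$,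 $E\xi_1(1)^2>0$ and $|\xi_1(1)|\le\delta$ almost surely. *)

theory Defs
  imports "HOL-Probability.Probability"
begin

definition hk_nbrs :: "real \<Rightarrow> ('v \<Rightarrow> real) \<Rightarrow> 'v \<Rightarrow> 'v set" where
  "hk_nbrs \<epsilon> x i = {j. \<bar>x j - x i\<bar> \<le> \<epsilon>}"

definition clip01 :: "real \<Rightarrow> real" where
  "clip01 y = (if y > 1 then 1 else if y < 0 then 0 else y)"

text \<open>Prejudice of agent i: J1 if i in S1, J2 otherwise (S2 is the complement of S1).\<close>
definition hk_step :: "real \<Rightarrow> real \<Rightarrow> 'v set \<Rightarrow> real \<Rightarrow> real \<Rightarrow>
    ('v::finite \<Rightarrow> real) \<Rightarrow> ('v \<Rightarrow> real) \<Rightarrow> 'v \<Rightarrow> real" where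
  "hk_step \<epsilon> \<alpha> S1 J1 J2 x noise i =
     clip01 ((1 - \<alpha>) * ((\<Sum>j\<in>hk_nbrs \<epsilon> x i. x j) / real (card (hk_nbrs \<epsilon> x i)))
             + \<alpha> * (if i \<in> S1 then J1 else J2) + noise i)"

fun hk_traj :: "real \<Rightarrow> real \<Rightarrow> 'v set \<Rightarrow> real \<Rightarrow> real \<Rightarrow> ('v::finite \<Rightarrow> real) \<Rightarrow>
    ('v \<Rightarrow> nat \<Rightarrow> real) \<Rightarrow> nat \<Rightarrow> 'v \<Rightarrow> real" where
  "hk_traj \<epsilon> \<alpha> S1 J1 J2 x0 \<xi> 0 = x0"
| "hk_traj \<epsilon> \<alpha> S1 J1 J2 x0 \<xi> (Suc t) =
     hk_step \<epsilon> \<alpha> S1 J1 J2 (hk_traj \<epsilon> \<alpha> S1 J1 J2 x0 \<xi> t) (\<lambda>i. \<xi> i (Suc t))"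

end

theory Submission
  imports Defs
begin

lemma clip_bound:
  assumes "J \<in> {0..1}"
  shows "\<bar>clip01 y - J\<bar> \<le> \<bar>y - J\<bar>"
  using assms by (auto simp: clip01_def)

lemma step_bound:
  fixes x :: "'v::finite \<Rightarrow> real"
  assumes J: "J1 \<in> {0..1}" "J2 \<in> {0..1}" and n: "\<bar>noise i\<bar> \<le> \<delta>"
    and a: "\<alpha> \<le> 1" and e: "0 \<le> \<epsilon>"
  shows "\<bar>hk_step \<epsilon> \<alpha> S1 J1 J2 x noise i - (if i \<in> S1 then J1 else J2)\<bar>
        \<le> (1 - \<alpha>) * (\<bar>x i - (if i \<in> S1 then J1 else J2)\<bar> + \<epsilon>) + \<delta>"
proof -
  define N where "N = hk_nbrs \<epsilon> x i"
  define J where "J = (if i \<in> S1 then J1 else J2)"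
  have J01: "J \<in> {0..1}" using J by (simp add: J_def)
  have fin: "finite N" by simp
  have iN: "i \<in> N" using e by (simp add: N_def hk_nbrs_def)
  have cp: "card N > 0" using fin iN card_gt_0_iff by blast
  define avg where "avg = (\<Sum>j\<in>N. x j) / real (card N)"
  have s1: "(\<Sum>j\<in>N. x j) \<le> (\<Sum>j\<in>N. x i + \<epsilon>)"
    by (rule sum_mono) (auto simp: N_def hk_nbrs_def)
  have s2: "(\<Sum>j\<in>N. x i - \<epsilon>) \<le> (\<Sum>j\<in>N. x j)"
    by (rule sum_mono) (auto simp: N_def hk_nbrs_def)
  have u: "avg \<le> x i + \<epsilon>" using s1 cp by (simp add: avg_def divide_le_eq mult.commute)
  have l: "x i - \<epsilon> \<le> avg" using s2 cp by (simp add: avg_def le_divide_eq mult.commute)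
  have "\<bar>avg - J\<bar> \<le> \<bar>x i - J\<bar> + \<epsilon>" using u l by linarith
  hence m: "(1 - \<alpha>) * \<bar>avg - J\<bar> \<le> (1 - \<alpha>) * (\<bar>x i - J\<bar> + \<epsilon>)"
    using a by (intro mult_left_mono) auto
  have "hk_step \<epsilon> \<alpha> S1 J1 J2 x noise i = clip01 ((1 - \<alpha>) * avg + \<alpha> * J + noise i)"
    by (simp add: hk_step_def avg_def N_def J_def)
  moreover have "\<bar>clip01 ((1 - \<alpha>) * avg + \<alpha> * J + noise i) - J\<bar>
      \<le> \<bar>(1 - \<alpha>) * avg + \<alpha> * J + noise i - J\<bar>" by (rule clip_bound[OF J01])
  moreover have "(1 - \<alpha>) * avg + \<alpha> * J + noise i - J = (1 - \<alpha>) * (avg - J) + noise i"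
    by (simp add: algebra_simps)
  moreover have "\<bar>(1 - \<alpha>) * (avg - J)\<bar> = (1 - \<alpha>) * \<bar>avg - J\<bar>"
    using a by (simp add: abs_mult)
  ultimately show ?thesis using m n unfolding J_def[symmetric] by linarith
qed

lemma traj_bound:
  fixes x0 :: "'v::finite \<Rightarrow> real"
  assumes J: "J1 \<in> {0..1}" "J2 \<in> {0..1}"
    and n: "\<And>i t. 1 \<le> t \<Longrightarrow> \<bar>\<xi> i t\<bar> \<le> \<delta>"
    and a: "0 < \<alpha>" "\<alpha> \<le> 1" and e: "0 \<le> \<epsilon>" and d: "0 \<le> \<delta>"
    and x0: "\<And>i. x0 i \<in> {0..1}"
  shows "\<bar>hk_traj \<epsilon> \<alpha> S1 J1 J2 x0 \<xi> t i - (if i \<in> S1 then J1 else J2)\<bar>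
        \<le> ((1 - \<alpha>) * \<epsilon> + \<delta>) / \<alpha> + (1 - \<alpha>) ^ t"
proof (induction t)
  case 0
  have "\<bar>x0 i - (if i \<in> S1 then J1 else J2)\<bar> \<le> 1" using x0[of i] J by auto
  moreover have "((1 - \<alpha>) * \<epsilon> + \<delta>) / \<alpha> \<ge> 0" using a e d by simp
  ultimately show ?case by simp
next
  case (Suc t)
  define B where "B = ((1 - \<alpha>) * \<epsilon> + \<delta>) / \<alpha>"
  have hB: "\<alpha> * B = (1 - \<alpha>) * \<epsilon> + \<delta>" using a by (simp add: B_def)
  let ?e = "\<bar>hk_traj \<epsilon> \<alpha> S1 J1 J2 x0 \<xi> t i - (if i \<in> S1 then J1 else J2)\<bar>"
  have st: "\<bar>hk_traj \<epsilon> \<alpha> S1 J1 J2 x0 \<xi> (Suc t) i - (if i \<in> S1 then J1 else J2)\<bar>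
     \<le> (1 - \<alpha>) * (?e + \<epsilon>) + \<delta>"
    using step_bound[OF J, of "\<lambda>i. \<xi> i (Suc t)" i \<delta> \<alpha> \<epsilon>] n[of "Suc t" i] a e by simp
  have "(1 - \<alpha>) * ?e \<le> (1 - \<alpha>) * (B + (1 - \<alpha>) ^ t)"
    using Suc a by (intro mult_left_mono) (auto simp: B_def)
  hence "(1 - \<alpha>) * (?e + \<epsilon>) + \<delta> \<le> B + (1 - \<alpha>) ^ Suc t"
    using hB by (simp add: algebra_simps)
  thus ?case using st by (simp add: B_def)
qed

lemma limsup_part:
  fixes f :: "nat \<Rightarrow> 'v \<Rightarrow> real"
  assumes b: "\<And>t i. i \<in> S \<Longrightarrow> f t i \<le> B + (1 - \<alpha>) ^ t"
    and a: "0 < \<alpha>" "\<alpha> \<le> 1"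
  shows "limsup (\<lambda>t. SUP i\<in>S. ereal (f t i)) \<le> ereal B"
proof -
  have "(\<lambda>t. (1 - \<alpha>) ^ t) \<longlonglongrightarrow> 0" using a by (intro LIMSEQ_power_zero) auto
  hence "(\<lambda>t. B + (1 - \<alpha>) ^ t) \<longlonglongrightarrow> B" using tendsto_add_const_iff[of B] by (metis add.right_neutral tendsto_add_const_iff)
  hence "(\<lambda>t. ereal (B + (1 - \<alpha>) ^ t)) \<longlonglongrightarrow> ereal B" by simp
  hence L: "limsup (\<lambda>t. ereal (B + (1 - \<alpha>) ^ t)) = ereal B"
    by (simp add: lim_imp_Limsup)
  have "limsup (\<lambda>t. SUP i\<in>S. ereal (f t i)) \<le> limsup (\<lambda>t. ereal (B + (1 - \<alpha>) ^ t))"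
    by (intro Limsup_mono always_eventually allI SUP_least) (use b in auto)
  thus ?thesis using L by simp
qed

theorem theorem2:
  fixes M :: "'a measure" and \<xi> :: "'v::finite \<Rightarrow> nat \<Rightarrow> 'a \<Rightarrow> real"
    and S1 S2 :: "'v set" and J1 J2 \<epsilon> \<alpha> \<delta> :: real and x0 :: "'v \<Rightarrow> real"
  assumes "prob_space M"
    and "S1 \<inter> S2 = {}" and "S1 \<union> S2 = UNIV"
    and "J1 \<in> {0..1}" and "J2 \<in> {0..1}" and "\<bar>J1 - J2\<bar> > \<epsilon>"
    and "0 < \<epsilon>" and "\<epsilon> < 1" and "0 < \<alpha>" and "\<alpha> \<le> 1" and "0 \<le> \<delta>"
    and "\<And>i. x0 i \<in> {0..1}"
    and "\<And>i t. 1 \<le> t \<Longrightarrow> \<xi> i t \<in> borel_measurable M"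
    and "prob_space.indep_vars M (\<lambda>_. borel) (\<lambda>(i, t). \<xi> i t) (UNIV \<times> {1..})"
    and "\<And>i j t s. 1 \<le> t \<Longrightarrow> 1 \<le> s \<Longrightarrow> distr M borel (\<xi> i t) = distr M borel (\<xi> j s)"
    and "\<And>i. prob_space.expectation M (\<xi> i 1) = 0"
    and "\<And>i. prob_space.expectation M (\<lambda>\<omega>. (\<xi> i 1 \<omega>)\<^sup>2) > 0"
    and "\<And>i t. 1 \<le> t \<Longrightarrow> AE \<omega> in M. \<bar>\<xi> i t \<omega>\<bar> \<le> \<delta>"
  shows "AE \<omega> in M.
      limsup (\<lambda>t. SUP i\<in>S1. ereal \<bar>hk_traj \<epsilon> \<alpha> S1 J1 J2 x0 (\<lambda>i t. \<xi> i t \<omega>) t i - J1\<bar>)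
        \<le> ereal (((1 - \<alpha>) * \<epsilon> + \<delta>) / \<alpha>)
    \<and> limsup (\<lambda>t. SUP i\<in>S2. ereal \<bar>hk_traj \<epsilon> \<alpha> S1 J1 J2 x0 (\<lambda>i t. \<xi> i t \<omega>) t i - J2\<bar>)
        \<le> ereal (((1 - \<alpha>) * \<epsilon> + \<delta>) / \<alpha>)"
proof -
  have "AE \<omega> in M. \<forall>i. \<forall>t. 1 \<le> t \<longrightarrow> \<bar>\<xi> i t \<omega>\<bar> \<le> \<delta>"
    using assms(18) by (simp add: AE_all_countable)
  thus ?thesis
  proof (rule AE_mp, intro AE_I2 impI)
    fix \<omega> assume n: "\<forall>i. \<forall>t. 1 \<le> t \<longrightarrow> \<bar>\<xi> i t \<omega>\<bar> \<le> \<delta>"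
    have tb: "\<And>t i. \<bar>hk_traj \<epsilon> \<alpha> S1 J1 J2 x0 (\<lambda>i t. \<xi> i t \<omega>) t i - (if i \<in> S1 then J1 else J2)\<bar>
        \<le> ((1 - \<alpha>) * \<epsilon> + \<delta>) / \<alpha> + (1 - \<alpha>) ^ t"
      by (rule traj_bound) (use assms n in auto)
    show "limsup (\<lambda>t. SUP i\<in>S1. ereal \<bar>hk_traj \<epsilon> \<alpha> S1 J1 J2 x0 (\<lambda>i t. \<xi> i t \<omega>) t i - J1\<bar>)
        \<le> ereal (((1 - \<alpha>) * \<epsilon> + \<delta>) / \<alpha>)
    \<and> limsup (\<lambda>t. SUP i\<in>S2. ereal \<bar>hk_traj \<epsilon> \<alpha> S1 J1 J2 x0 (\<lambda>i t. \<xi> i t \<omega>) t i - J2\<bar>)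
        \<le> ereal (((1 - \<alpha>) * \<epsilon> + \<delta>) / \<alpha>)"
    proof
      show "limsup (\<lambda>t. SUP i\<in>S1. ereal \<bar>hk_traj \<epsilon> \<alpha> S1 J1 J2 x0 (\<lambda>i t. \<xi> i t \<omega>) t i - J1\<bar>)
        \<le> ereal (((1 - \<alpha>) * \<epsilon> + \<delta>) / \<alpha>)"
      proof (rule limsup_part[OF _ assms(9,10)])
        fix t i assume "i \<in> S1"
        thus "\<bar>hk_traj \<epsilon> \<alpha> S1 J1 J2 x0 (\<lambda>i t. \<xi> i t \<omega>) t i - J1\<bar>
          \<le> ((1 - \<alpha>) * \<epsilon> + \<delta>) / \<alpha> + (1 - \<alpha>) ^ t" using tb[of t i] by simp
      qed
      show "limsup (\<lambda>t. SUP i\<in>S2. ereal \<bar>hk_traj \<epsilon> \<alpha> S1 J1 J2 x0 (\<lambda>i t. \<xi> i t \<omega>) t i - J2\<bar>)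
        \<le> ereal (((1 - \<alpha>) * \<epsilon> + \<delta>) / \<alpha>)"
      proof (rule limsup_part[OF _ assms(9,10)])
        fix t i assume "i \<in> S2"
        hence "i \<notin> S1" using assms(2) by blast
        thus "\<bar>hk_traj \<epsilon> \<alpha> S1 J1 J2 x0 (\<lambda>i t. \<xi> i t \<omega>) t i - J2\<bar>
          \<le> ((1 - \<alpha>) * \<epsilon> + \<delta>) / \<alpha> + (1 - \<alpha>) ^ t" using tb[of t i] by simp
      qed
    qed
  qed
qed

end
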